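(* Let $G\neq0$ and $\Lambda\in\mathbb R$, and let $T(U)=2G\log U+\Lambda\,\mathrm{tr}(\log U)\mathbb 1$ on $\mathrm{PSym}(3)$. Then there exists a differentiable function $W:\mathrm{PSym}(3)\to\mathbb R$ with $T(U)=D W(U)$ (i.e. $\langle T(U),H\rangle=DW(U)[H]$ for all $H\in\mathrm{Sym}(3)$) if and only if $\Lambda=0$ (equivalently, Poisson's ratio $\nu=\frac{\Lambda}{2(\Lambda+G)}$ vanishes). In that case, with normalization $W(\mathbb 1)=0$, $$W(U)=2G\big[\langle U,\log U-\mathbb 1\rangle+3\big]=2G\sum_{i=1}^3\lambda_i(\ln\lambda_i-1)+6G,$$ where $\lambda_i$ are the eigenvalues of $U$.
   Context: $\mathrm{Sym}(3)$: real symmetric $3\times3$ matrices; $\mathrm{PSym}(3)$: symmetric positive definite ones; $\mathbb 1$: identity; $\log$: principal matrix logarithm; $\langle X,Y\rangle=\mathrm{tr}(Y^TX)$. *)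

theory Defs
  imports "HOL-Analysis.Analysis"
begin

type_synonym mat3 = "real^3^3"

definition frob :: "mat3 \<Rightarrow> mat3 \<Rightarrow> real" where
  "frob X Y = trace (transpose Y ** X)"

definition Sym3 :: "mat3 set" where
  "Sym3 = {A. transpose A = A}"

definition PSym3 :: "mat3 set" where
  "PSym3 = {A \<in> Sym3. \<forall>x::real^3. x \<noteq> 0 \<longrightarrow> x \<bullet> (A *v x) > 0}"

definition diag3 :: "(3 \<Rightarrow> real) \<Rightarrow> mat3" where
  "diag3 l = (\<chi> i j. if i = j then l i else 0)"

definition mlog :: "mat3 \<Rightarrow> mat3" where
  "mlog U = (THE L. \<exists>Q l. orthogonal_matrix Q \<and> (\<forall>i. l i > 0) \<and>
       U = Q ** diag3 l ** transpose Q \<and> L = Q ** diag3 (\<lambda>i. ln (l i)) ** transpose Q)"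

definition Tmap :: "real \<Rightarrow> real \<Rightarrow> mat3 \<Rightarrow> mat3" where
  "Tmap G \<Lambda> U = (2 * G) *\<^sub>R mlog U + (\<Lambda> * trace (mlog U)) *\<^sub>R mat 1"

definition is_potential :: "(mat3 \<Rightarrow> real) \<Rightarrow> (mat3 \<Rightarrow> mat3) \<Rightarrow> bool" where
  "is_potential W T \<longleftrightarrow> (\<forall>U\<in>PSym3. \<exists>D. (W has_derivative D) (at U within PSym3) \<and>
       (\<forall>H\<in>Sym3. D H = frob (T U) H))"

end

theory Submission
  imports Defs
begin


lemma frob_alt: "frob X Y = (\<Sum>i\<in>UNIV. \<Sum>j\<in>UNIV. X$i$j * Y$i$j)"
  unfolding frob_def trace_def matrix_matrix_mult_def transpose_def
  by (simp, subst sum.swap, simp add: mult.commute)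

lemma sandwich_entry: "(P ** diag3 a ** transpose P)$i$j = (\<Sum>k\<in>UNIV. P$i$k * a k * P$j$k)"
  unfolding diag3_def matrix_matrix_mult_def transpose_def
  by (simp add: sum_distrib_right if_distrib sum.delta cong: if_cong)

lemma frob_sandwich:
  "frob (P ** diag3 a ** transpose P) (Q ** diag3 b ** transpose Q)
    = (\<Sum>k\<in>UNIV. \<Sum>m\<in>UNIV. a k * b m * ((transpose P ** Q)$k$m)^2)"
proof -
  have "frob (P ** diag3 a ** transpose P) (Q ** diag3 b ** transpose Q)
     = (\<Sum>i\<in>UNIV. \<Sum>j\<in>UNIV. \<Sum>k\<in>UNIV. \<Sum>m\<in>UNIV. a k * b m * ((P$i$k * Q$i$m) * (P$j$k * Q$j$m)))"
    unfolding frob_alt sandwich_entry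
    by (simp add: sum_product sum_distrib_left algebra_simps)
       (rule sum.cong[OF refl], rule sum.cong[OF refl], rule sum.swap)
  also have "\<dots> = (\<Sum>k\<in>UNIV. \<Sum>m\<in>UNIV. \<Sum>i\<in>UNIV. \<Sum>j\<in>UNIV. a k * b m * ((P$i$k * Q$i$m) * (P$j$k * Q$j$m)))"
  proof -
    let ?f = "\<lambda>i j k m. a k * b m * ((P$i$k * Q$i$m) * (P$j$k * Q$j$m))"
    have "(\<Sum>i\<in>UNIV. \<Sum>j\<in>UNIV. \<Sum>k\<in>UNIV. \<Sum>m\<in>UNIV. ?f i j k m)
        = (\<Sum>i\<in>UNIV. \<Sum>k\<in>UNIV. \<Sum>j\<in>UNIV. \<Sum>m\<in>UNIV. ?f i j k m)"
      by (rule sum.cong[OF refl], rule sum.swap)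
    also have "\<dots> = (\<Sum>i\<in>UNIV. \<Sum>k\<in>UNIV. \<Sum>m\<in>UNIV. \<Sum>j\<in>UNIV. ?f i j k m)"
      by (rule sum.cong[OF refl], rule sum.cong[OF refl], rule sum.swap)
    also have "\<dots> = (\<Sum>k\<in>UNIV. \<Sum>i\<in>UNIV. \<Sum>m\<in>UNIV. \<Sum>j\<in>UNIV. ?f i j k m)"
      by (rule sum.swap)
    also have "\<dots> = (\<Sum>k\<in>UNIV. \<Sum>m\<in>UNIV. \<Sum>i\<in>UNIV. \<Sum>j\<in>UNIV. ?f i j k m)"
      by (rule sum.cong[OF refl], rule sum.swap)
    finally show ?thesis .
  qed
  also have "\<dots> = (\<Sum>k\<in>UNIV. \<Sum>m\<in>UNIV. a k * b m * ((transpose P ** Q)$k$m)^2)"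
    unfolding matrix_matrix_mult_def transpose_def power2_eq_square
    by (simp add: sum_product sum_distrib_left algebra_simps)
  finally show ?thesis .
qed


lemma mul_diag_entry: "(P ** diag3 l)$i$j = P$i$j * l j"
  unfolding diag3_def matrix_matrix_mult_def
  by (simp add: if_distrib sum.delta cong: if_cong)

lemma diag_mul_entry: "(diag3 l ** P)$i$j = l i * P$i$j"
  unfolding diag3_def matrix_matrix_mult_def
  using exhaust_3[of i] by (auto simp: sum_3)

lemma transpose_diag3[simp]: "transpose (diag3 l) = diag3 l"
  unfolding diag3_def transpose_def by (simp add: vec_eq_iff)

lemma transpose_sandwich: "transpose (Q ** diag3 l ** transpose Q) = Q ** diag3 l ** transpose Q"
  by (simp add: matrix_transpose_mul matrix_mul_assoc)

lemma diag3_mult: "diag3 a ** diag3 b = diag3 (\<lambda>i. a i * b i)"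
  by (simp add: vec_eq_iff diag_mul_entry) (simp add: diag3_def)

lemma log_unique:
  assumes Q: "orthogonal_matrix Q" and Q': "orthogonal_matrix Q'"
    and l: "\<forall>i. l i > 0" and l': "\<forall>i. l' i > 0"
    and eq: "Q ** diag3 l ** transpose Q = Q' ** diag3 l' ** transpose Q'"
  shows "Q ** diag3 (\<lambda>i. ln (l i)) ** transpose Q = Q' ** diag3 (\<lambda>i. ln (l' i)) ** transpose Q'"
proof -
  define P where "P = transpose Q' ** Q"
  have QQ: "transpose Q ** Q = mat 1" "Q ** transpose Q = mat 1"
    and QQ': "transpose Q' ** Q' = mat 1" "Q' ** transpose Q' = mat 1"
    using Q Q' by (auto simp: orthogonal_matrix_def)
  have "transpose Q' ** (Q ** diag3 l ** transpose Q) ** Q = P ** diag3 l"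
    by (simp add: P_def) (metis matrix_mul_assoc matrix_mul_rid QQ(1))
  moreover have "transpose Q' ** (Q' ** diag3 l' ** transpose Q') ** Q = diag3 l' ** P"
    by (simp add: P_def) (metis matrix_mul_assoc matrix_mul_lid QQ'(1))
  ultimately have PD: "P ** diag3 l = diag3 l' ** P" using eq by simp
  have "P$i$j * ln (l j) = ln (l' i) * P$i$j" for i j
  proof -
    have "P$i$j * l j = l' i * P$i$j" using PD
      by (metis mul_diag_entry diag_mul_entry)
    then have "P$i$j = 0 \<or> l j = l' i" by auto
    then show ?thesis by auto
  qed
  then have PL: "P ** diag3 (\<lambda>i. ln (l i)) = diag3 (\<lambda>i. ln (l' i)) ** P"
    by (simp add: vec_eq_iff mul_diag_entry diag_mul_entry)
  have QP: "Q' ** P = Q" unfolding P_def by (metis matrix_mul_assoc matrix_mul_lid QQ'(2))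
  have "Q ** diag3 (\<lambda>i. ln (l i)) ** transpose Q = Q' ** (P ** diag3 (\<lambda>i. ln (l i))) ** transpose Q"
    by (metis QP matrix_mul_assoc)
  also have "\<dots> = Q' ** diag3 (\<lambda>i. ln (l' i)) ** (P ** transpose Q)"
    by (metis PL matrix_mul_assoc)
  also have "P ** transpose Q = transpose Q'"
    unfolding P_def by (metis matrix_mul_assoc matrix_mul_rid QQ(2) matrix_transpose_mul transpose_transpose)
  finally show ?thesis .
qed

lemma mlog_eq:
  assumes Q: "orthogonal_matrix Q" and l: "\<forall>i. l i > 0"
    and U: "U = Q ** diag3 l ** transpose Q"
  shows "mlog U = Q ** diag3 (\<lambda>i. ln (l i)) ** transpose Q"
  unfolding mlog_def
proof (rule the_equality)
  show "\<exists>Q' l'. orthogonal_matrix Q' \<and> (\<forall>i. l' i > 0) \<and> U = Q' ** diag3 l' ** transpose Q' \<and>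
      Q ** diag3 (\<lambda>i. ln (l i)) ** transpose Q = Q' ** diag3 (\<lambda>i. ln (l' i)) ** transpose Q'"
    using assms by blast
next
  fix L assume "\<exists>Q' l'. orthogonal_matrix Q' \<and> (\<forall>i. l' i > 0) \<and> U = Q' ** diag3 l' ** transpose Q' \<and>
      L = Q' ** diag3 (\<lambda>i. ln (l' i)) ** transpose Q'"
  then obtain Q' l' where "orthogonal_matrix Q'" "\<forall>i. l' i > 0" "U = Q' ** diag3 l' ** transpose Q'"
    "L = Q' ** diag3 (\<lambda>i. ln (l' i)) ** transpose Q'" by blast
  then show "L = Q ** diag3 (\<lambda>i. ln (l i)) ** transpose Q"
    using log_unique[OF Q _ l] U by metis
qed



lemma sym_dot: assumes "transpose A = (A::mat3)" shows "x \<bullet> (A *v y) = (A *v x) \<bullet> y"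
  by (metis assms dot_lmul_matrix transpose_matrix_vector)

lemma eig_sub:
  fixes A :: mat3
  assumes sym: "transpose A = A" and S: "subspace S" and inv: "\<forall>x\<in>S. A *v x \<in> S"
    and x0: "x0 \<in> S" "x0 \<noteq> 0"
  shows "\<exists>v\<in>S. norm v = 1 \<and> A *v v = (v \<bullet> (A *v v)) *\<^sub>R v"
proof -
  define K where "K = S \<inter> sphere 0 1"
  define f where "f x = x \<bullet> (A *v x)" for x
  have "compact K" unfolding K_def
    by (metis S closed_subspace compact_sphere closed_Int_compact)
  moreover have "(1/norm x0) *\<^sub>R x0 \<in> K" using x0 S unfolding K_def
    by (auto simp: subspace_scale)
  hence "K \<noteq> {}" by auto
  moreover have "continuous_on K f" unfolding f_def
    by (intro continuous_intros linear_continuous_on) (simp add: matrix_vector_mul_bounded_linear)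
  ultimately obtain v where vK: "v \<in> K" and vmax: "\<forall>y\<in>K. f y \<le> f v"
    using continuous_attains_sup by metis
  define lam where "lam = f v"
  have vS: "v \<in> S" and vn: "norm v = 1" using vK by (auto simp: K_def)
  have vv: "v \<bullet> v = 1" using vn by (simp add: norm_eq_1)
  have fscale: "f (c *\<^sub>R x) = c^2 * f x" for c x
    by (simp add: f_def matrix_vector_mult_scaleR power2_eq_square)
  have bound: "f x \<le> lam * (x \<bullet> x)" if xS: "x \<in> S" for x
  proof (cases "x = 0")
    case True then show ?thesis by (simp add: f_def)
  next
    case False
    have "(1/norm x) *\<^sub>R x \<in> K" using xS False S unfolding K_def by (auto simp: subspace_scale)
    hence "f ((1/norm x) *\<^sub>R x) \<le> lam" using vmax lam_def by auto
    hence "(1/norm x)^2 * f x \<le> lam" by (simp add: fscale)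
    hence "f x \<le> lam * (norm x)^2" using False by (simp add: field_simps)
    then show ?thesis by (simp add: power2_norm_eq_inner)
  qed
  define w where "w = A *v v - lam *\<^sub>R v"
  have wS: "w \<in> S" unfolding w_def using inv vS S by (simp add: subspace_diff subspace_scale)
  have vw: "v \<bullet> w = 0" unfolding w_def lam_def f_def using vv by (simp add: inner_diff_right)
  have wAv: "w \<bullet> (A *v v) = w \<bullet> w"
  proof -
    have "A *v v = w + lam *\<^sub>R v" by (simp add: w_def)
    then show ?thesis using vw by (simp add: inner_add_right inner_commute)
  qed
  define N where "N = w \<bullet> w"
  define C where "C = lam * N - f w"
  have key: "2 * s * N \<le> s^2 * C" for s
  proof -
    have "v + s *\<^sub>R w \<in> S" using vS wS S by (simp add: subspace_add subspace_scale)
    hence "f (v + s *\<^sub>R w) \<le> lam * ((v + s *\<^sub>R w) \<bullet> (v + s *\<^sub>R w))" by (rule bound)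
    moreover have "f (v + s *\<^sub>R w) = lam + 2 * s * N + s^2 * f w"
    proof -
      have "v \<bullet> (A *v w) = w \<bullet> (A *v v)" using sym_dot[OF sym, of v w] by (simp add: inner_commute)
      then show ?thesis unfolding f_def lam_def N_def
        by (simp add: matrix_vector_right_distrib matrix_vector_mult_scaleR inner_add_left inner_add_right
            wAv power2_eq_square algebra_simps)
    qed
    moreover have "(v + s *\<^sub>R w) \<bullet> (v + s *\<^sub>R w) = 1 + s^2 * N"
      using vv vw unfolding N_def
      by (simp add: inner_add_left inner_add_right inner_commute power2_eq_square)
    ultimately have "lam + 2 * s * N + s^2 * f w \<le> lam * (1 + s^2 * N)" by metis
    then show ?thesis unfolding C_def by (simp add: algebra_simps)
  qed
  have "N = 0"
  proof (rule ccontr)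
    assume "N \<noteq> 0"
    hence Np: "N > 0" unfolding N_def by simp
    define s where "s = N / (\<bar>C\<bar> + 1)"
    have sp: "s > 0" using Np by (simp add: s_def add_pos_nonneg)
    have "2 * s * N \<le> s^2 * C" by (rule key)
    hence "2 * N \<le> s * C" using sp by (simp add: power2_eq_square)
    also have "s * C \<le> s * \<bar>C\<bar>" using sp by (simp add: mult_left_mono)
    also have "s * \<bar>C\<bar> < N" using Np by (simp add: s_def field_simps)
    finally show False using Np by simp
  qed
  hence "w = 0" unfolding N_def by simp
  hence "A *v v = lam *\<^sub>R v" by (simp add: w_def)
  then show ?thesis using vS vn unfolding lam_def f_def by metis
qed


lemma spectral3:
  fixes A :: mat3
  assumes sym: "transpose A = A"
  shows "\<exists>Q l. orthogonal_matrix Q \<and> A = Q ** diag3 l ** transpose Q"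
proof -
  obtain v1 where v1n: "norm v1 = 1" and v1e: "A *v v1 = (v1 \<bullet> (A *v v1)) *\<^sub>R v1"
    using eig_sub[OF sym subspace_UNIV, of "axis 1 1"] by auto
  obtain P where P: "orthogonal_matrix P" "P *v axis 1 1 = v1"
    using orthogonal_matrix_exists_basis[OF v1n] by metis
  have c1: "column 1 P = v1" using P(2) by (simp add: matrix_vector_mult_basis)
  have "orthogonal (column 1 P) (column 2 P)" "norm (column 2 P) = 1"
    using P(1) unfolding orthogonal_matrix_orthonormal_columns by auto
  hence w2: "v1 \<bullet> column 2 P = 0" "column 2 P \<noteq> 0" using c1 by (auto simp: orthogonal_def)
  define S2 where "S2 = {x. v1 \<bullet> x = 0}"
  have inv2: "\<forall>x\<in>S2. A *v x \<in> S2"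
  proof
    fix x assume "x \<in> S2"
    then have "v1 \<bullet> x = 0" by (simp add: S2_def)
    then show "A *v x \<in> S2" unfolding S2_def using sym_dot[OF sym, of v1 x] v1e
      by (metis (mono_tags, lifting) inner_scaleR_left mem_Collect_eq mult_zero_right)
  qed
  obtain v2 where v2S: "v2 \<in> S2" and v2n: "norm v2 = 1" and v2e: "A *v v2 = (v2 \<bullet> (A *v v2)) *\<^sub>R v2"
    using eig_sub[OF sym _ inv2, of "column 2 P"] w2 subspace_hyperplane unfolding S2_def by auto
  have o12: "v1 \<bullet> v2 = 0" using v2S by (simp add: S2_def)
  define S3 where "S3 = {x. v1 \<bullet> x = 0} \<inter> {x. v2 \<bullet> x = 0}"
  have sub3: "subspace S3" unfolding S3_def by (intro subspace_inter subspace_hyperplane)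
  have inv3: "\<forall>x\<in>S3. A *v x \<in> S3"
  proof
    fix x assume "x \<in> S3"
    then have "v1 \<bullet> x = 0" "v2 \<bullet> x = 0" by (auto simp add: S3_def)
    then show "A *v x \<in> S3" unfolding S3_def using sym_dot[OF sym, of v1 x] sym_dot[OF sym, of v2 x] v1e v2e
      by (metis (mono_tags, lifting) IntI inner_scaleR_left mem_Collect_eq mult_zero_right)
  qed
  have "(norm (cross3 v1 v2))\<^sup>2 = 1" using norm_cross_dot[of v1 v2] o12 v1n v2n by simp
  hence cz: "cross3 v1 v2 \<noteq> 0" by auto
  have cS: "cross3 v1 v2 \<in> S3" unfolding S3_def by (simp add: dot_cross_self)
  obtain v3 where v3S: "v3 \<in> S3" and v3n: "norm v3 = 1" and v3e: "A *v v3 = (v3 \<bullet> (A *v v3)) *\<^sub>R v3"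
    using eig_sub[OF sym sub3 inv3 cS cz] by auto
  have o13: "v1 \<bullet> v3 = 0" and o23: "v2 \<bullet> v3 = 0" using v3S by (auto simp: S3_def)
  define vs where "vs j = (if j = 1 then v1 else if j = 2 then v2 else v3)" for j :: 3
  define Q :: mat3 where "Q = (\<chi> i j. vs j $ i)"
  define l where "l j = vs j \<bullet> (A *v vs j)" for j
  have colQ: "column j Q = vs j" for j by (simp add: Q_def column_def vec_eq_iff)
  have vsn: "norm (vs j) = 1" for j using v1n v2n v3n by (simp add: vs_def)
  have vso: "i \<noteq> j \<Longrightarrow> orthogonal (vs i) (vs j)" for i j
    using exhaust_3[of i] exhaust_3[of j] o12 o13 o23
    by (auto simp: vs_def orthogonal_def inner_commute)
  have Qo: "orthogonal_matrix Q"
    unfolding orthogonal_matrix_orthonormal_columns colQ using vsn vso by auto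
  have vse: "A *v vs j = l j *\<^sub>R vs j" for j
    using v1e v2e v3e by (simp add: vs_def l_def)
  have AQ: "A ** Q = Q ** diag3 l"
  proof -
    have "(A ** Q)$i$j = (A *v vs j)$i" for i j
      by (simp add: matrix_matrix_mult_def matrix_vector_mult_def Q_def)
    then show ?thesis using vse by (simp add: vec_eq_iff mul_diag_entry Q_def)
  qed
  have "A = A ** (Q ** transpose Q)" using Qo by (simp add: orthogonal_matrix_def)
  also have "\<dots> = Q ** diag3 l ** transpose Q" by (metis AQ matrix_mul_assoc)
  finally show ?thesis using Qo by blast
qed



lemma num3_distinct[simp]: "(1::3) \<noteq> 2" "(1::3) \<noteq> 3" "(2::3) \<noteq> 3" "(2::3) \<noteq> 1" "(3::3) \<noteq> 1" "(3::3) \<noteq> 2"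
  by simp_all

lemma PSym3_eig_pos:
  assumes U: "U \<in> PSym3" and Q: "orthogonal_matrix Q" and eq: "U = Q ** diag3 l ** transpose Q"
  shows "l i > 0"
proof -
  define x where "x = Q *v axis i 1"
  have QQ: "transpose Q ** Q = mat 1" using Q by (simp add: orthogonal_matrix_def)
  have "U ** Q = Q ** diag3 l ** (transpose Q ** Q)"
    by (simp only: eq matrix_mul_assoc)
  hence UQ: "U ** Q = Q ** diag3 l" by (simp add: QQ)
  have "U *v x = Q *v (diag3 l *v axis i 1)"
    by (simp add: x_def matrix_vector_mul_assoc UQ)
  also have "diag3 l *v axis i 1 = l i *\<^sub>R axis i 1"
    using exhaust_3[of i] by (auto simp: vec_eq_iff forall_3 diag3_def matrix_vector_mult_def axis_def sum_3)
  finally have Ux: "U *v x = l i *\<^sub>R x" by (simp add: x_def matrix_vector_mult_scaleR)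
  have "norm x = 1" using Q unfolding x_def
    by (simp add: matrix_vector_mult_basis orthogonal_matrix_orthonormal_columns)
  hence "x \<noteq> 0" "x \<bullet> x = 1" by (auto simp: norm_eq_1)
  hence "x \<bullet> (U *v x) > 0" using U by (auto simp: PSym3_def)
  thus ?thesis using Ux \<open>x \<bullet> x = 1\<close> by simp
qed

lemma PSym3_decomp:
  assumes U: "U \<in> PSym3"
  obtains Q l where "orthogonal_matrix Q" "\<forall>i. l i > 0" "U = Q ** diag3 l ** transpose Q"
proof -
  have "transpose U = U" using U by (simp add: PSym3_def Sym3_def)
  then obtain Q l where "orthogonal_matrix Q" "U = Q ** diag3 l ** transpose Q"
    using spectral3 by blast
  moreover then have "\<forall>i. l i > 0" using PSym3_eig_pos U by blast
  ultimately show ?thesis using that by blast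
qed

lemma diag3_one: "diag3 (\<lambda>i. 1) = mat 1"
  by (simp add: diag3_def mat_def vec_eq_iff)

lemma diag3_PSym3: assumes "\<forall>i. l i > 0" shows "diag3 l \<in> PSym3"
proof -
  have "x \<bullet> (diag3 l *v x) = (\<Sum>i\<in>UNIV. l i * (x$i)^2)" for x
    by (simp add: inner_vec_def diag3_def matrix_vector_mult_def sum_3 power2_eq_square algebra_simps)
  moreover have "x \<noteq> 0 \<Longrightarrow> (\<Sum>i\<in>UNIV. l i * (x$i)^2) > 0" for x
  proof -
    assume "x \<noteq> 0"
    then obtain j where "x$j \<noteq> 0" by (auto simp: vec_eq_iff)
    hence "l j * (x$j)^2 > 0" using assms by simp
    moreover have "\<forall>i\<in>UNIV. l i * (x$i)^2 \<ge> 0" using assms by (simp add: less_imp_le)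
    ultimately show ?thesis by (intro sum_pos2[where i=j]) auto
  qed
  moreover have "transpose (diag3 l) = diag3 l" by simp
  ultimately show ?thesis by (simp add: PSym3_def Sym3_def)
qed

lemma mlog_diag3: assumes "\<forall>i. l i > 0" shows "mlog (diag3 l) = diag3 (\<lambda>i. ln (l i))"
  using mlog_eq[OF orthogonal_matrix_id assms] by simp

lemma one_PSym3: "mat 1 \<in> PSym3" using diag3_PSym3[of "\<lambda>i. 1"] by (simp add: diag3_one)

lemma mlog_one: "mlog (mat 1) = mat 0"
  using mlog_diag3[of "\<lambda>i. 1"] by (simp add: diag3_one) (simp add: diag3_def mat_def vec_eq_iff)

lemma scaleR_mv: "(c *\<^sub>R A) *v x = c *\<^sub>R (A *v (x::real^3))" for A :: mat3
  by (simp add: vec_eq_iff matrix_vector_mult_def sum_distrib_left algebra_simps)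

lemma PSym3_convex:
  assumes "U \<in> PSym3" "V \<in> PSym3" "0 \<le> t" "t \<le> 1"
  shows "(1 - t) *\<^sub>R U + t *\<^sub>R V \<in> PSym3"
proof -
  have s: "transpose U = U" "transpose V = V" using assms by (auto simp: PSym3_def Sym3_def)
  have "transpose ((1 - t) *\<^sub>R U + t *\<^sub>R V) = (1 - t) *\<^sub>R U + t *\<^sub>R V"
    using s by (simp add: vec_eq_iff transpose_def)
  moreover have "x \<bullet> (((1 - t) *\<^sub>R U + t *\<^sub>R V) *v x) > 0" if "x \<noteq> 0" for x
  proof -
    have a: "x \<bullet> (U *v x) > 0" "x \<bullet> (V *v x) > 0" using assms that by (auto simp: PSym3_def)
    have "x \<bullet> (((1 - t) *\<^sub>R U + t *\<^sub>R V) *v x) = (1 - t) * (x \<bullet> (U *v x)) + t * (x \<bullet> (V *v x))"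
      by (simp add: matrix_vector_mult_add_rdistrib scaleR_mv inner_add_right)
    also have "\<dots> > 0"
    proof (cases "t = 0")
      case True then show ?thesis using a by simp
    next
      case False
      then have "t * (x \<bullet> (V *v x)) > 0" using a assms by simp
      moreover have "(1 - t) * (x \<bullet> (U *v x)) \<ge> 0" using a assms by simp
      ultimately show ?thesis by linarith
    qed
    finally show ?thesis .
  qed
  ultimately show ?thesis by (simp add: PSym3_def Sym3_def)
qed



lemma pot_line:
  assumes pot: "is_potential W T" and line: "\<forall>s\<in>S. K + s *\<^sub>R E \<in> PSym3"
    and t: "t \<in> S" and E: "E \<in> Sym3"
  shows "((\<lambda>s. W (K + s *\<^sub>R E)) has_real_derivative frob (T (K + t *\<^sub>R E)) E) (at t within S)"
proof -
  obtain D where dD: "(W has_derivative D) (at (K + t *\<^sub>R E) within PSym3)"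
    and DH: "\<forall>H\<in>Sym3. D H = frob (T (K + t *\<^sub>R E)) H"
    using pot line t unfolding is_potential_def by blast
  have c: "((\<lambda>s. K + s *\<^sub>R E) has_derivative (\<lambda>h. h *\<^sub>R E)) (at t within S)"
    by (auto intro!: derivative_eq_intros)
  have W': "(W has_derivative D) (at (K + t *\<^sub>R E) within (\<lambda>s. K + s *\<^sub>R E) ` S)"
    by (rule has_derivative_subset[OF dD]) (use line in auto)
  have "((W \<circ> (\<lambda>s. K + s *\<^sub>R E)) has_derivative (D \<circ> (\<lambda>h. h *\<^sub>R E))) (at t within S)"
    using diff_chain_within[OF c W'] by simp
  moreover have "D \<circ> (\<lambda>h. h *\<^sub>R E) = (*) (frob (T (K + t *\<^sub>R E)) E)"
  proof
    fix h
    have "bounded_linear D" using dD has_derivative_bounded_linear by blast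
    hence "D (h *\<^sub>R E) = h *\<^sub>R D E" by (simp add: linear_scale bounded_linear.linear)
    then show "(D \<circ> (\<lambda>h. h *\<^sub>R E)) h = frob (T (K + t *\<^sub>R E)) E * h" using DH E by simp
  qed
  ultimately show ?thesis unfolding has_field_derivative_def o_def by simp
qed

lemma same_deriv:
  fixes g h g' :: "real \<Rightarrow> real"
  assumes "convex S" "\<And>t. t \<in> S \<Longrightarrow> (g has_real_derivative g' t) (at t within S)"
    "\<And>t. t \<in> S \<Longrightarrow> (h has_real_derivative g' t) (at t within S)" "a \<in> S" "b \<in> S"
  shows "g a - g b = h a - h b"
proof -
  have "\<exists>c. \<forall>x\<in>S. g x - h x = c"
    by (rule has_field_derivative_zero_constant[OF assms(1)])
       (use assms(2,3) in \<open>auto intro!: derivative_eq_intros\<close>)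
  then obtain c where "\<forall>x\<in>S. g x - h x = c" by blast
  then have "g a - h a = c" "g b - h b = c" using assms(4,5) by auto
  then show ?thesis by linarith
qed



definition dg :: "real \<Rightarrow> real \<Rightarrow> mat3" where
  "dg a b = diag3 (\<lambda>i. if i = 1 then a else if i = 2 then b else 1)"
definition E1 :: mat3 where "E1 = diag3 (\<lambda>i. if i = 1 then 1 else 0)"
definition E2 :: mat3 where "E2 = diag3 (\<lambda>i. if i = 2 then 1 else 0)"

lemma dg_line1: "dg t b = dg 0 b + t *\<^sub>R E1"
  unfolding dg_def E1_def diag3_def by (simp add: vec_eq_iff)
lemma dg_line2: "dg a s = dg a 0 + s *\<^sub>R E2"
  unfolding dg_def E2_def diag3_def by (simp add: vec_eq_iff)

lemma E_sym: "E1 \<in> Sym3" "E2 \<in> Sym3"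
  unfolding Sym3_def E1_def E2_def by simp_all

lemma dg_PSym3: "a > 0 \<Longrightarrow> b > 0 \<Longrightarrow> dg a b \<in> PSym3"
  unfolding dg_def by (rule diag3_PSym3) auto

lemma frob_E: "frob X E1 = X$1$1" "frob X E2 = X$2$2"
  unfolding frob_alt E1_def E2_def diag3_def by (simp_all add: sum_3)

lemma Tmap_dg:
  assumes "a > 0" "b > 0"
  shows "(Tmap G L (dg a b))$1$1 = 2*G*ln a + L*(ln a + ln b)"
    "(Tmap G L (dg a b))$2$2 = 2*G*ln b + L*(ln a + ln b)"
proof -
  have m: "mlog (dg a b) = diag3 (\<lambda>i. ln (if i = 1 then a else if i = 2 then b else 1))"
    unfolding dg_def using assms by (intro mlog_diag3) auto
  show "(Tmap G L (dg a b))$1$1 = 2*G*ln a + L*(ln a + ln b)"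
    "(Tmap G L (dg a b))$2$2 = 2*G*ln b + L*(ln a + ln b)"
    unfolding Tmap_def m by (simp_all add: diag3_def trace_def sum_3 mat_def)
qed

lemma not_potential:
  assumes L: "L \<noteq> 0"
  shows "\<not> is_potential W (Tmap G L)"
proof
  assume pot: "is_potential W (Tmap G L)"
  define c where "c = 2*G + L"
  have step1: "W (dg a b) - W (dg 1 b) = c*(a*ln a - a + 1) + L*(a - 1)*ln b" if ab: "a > 0" "b > 0" for a b
  proof -
    define h where "h s = c * (s * ln s - s) + L * s * ln b" for s
    have "W (dg a b) - W (dg 1 b) = h a - h 1"
    proof (rule same_deriv[where S="{0<..}" and g'="\<lambda>s. 2*G*ln s + L*(ln s + ln b)"])
      fix t :: real assume t: "t \<in> {0<..}"
      have "((\<lambda>s. W (dg 0 b + s *\<^sub>R E1)) has_real_derivative frob (Tmap G L (dg 0 b + t *\<^sub>R E1)) E1) (at t within {0<..})"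
        by (rule pot_line[OF pot _ t E_sym(1)]) (use ab in \<open>auto simp: dg_line1[symmetric] dg_PSym3\<close>)
      then show "((\<lambda>s. W (dg s b)) has_real_derivative 2*G*ln t + L*(ln t + ln b)) (at t within {0<..})"
        using t ab by (simp add: dg_line1[symmetric] frob_E Tmap_dg)
      show "(h has_real_derivative 2*G*ln t + L*(ln t + ln b)) (at t within {0<..})"
        unfolding h_def using t
        by (auto intro!: derivative_eq_intros simp: c_def algebra_simps)
    qed (use ab in auto)
    then show ?thesis by (simp add: h_def algebra_simps)
  qed
  have step2: "W (dg a b) - W (dg a 1) = c*(b*ln b - b + 1) + L*(b - 1)*ln a" if ab: "a > 0" "b > 0" for a b
  proof -
    define h where "h s = c * (s * ln s - s) + L * s * ln a" for s
    have "W (dg a b) - W (dg a 1) = h b - h 1"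
    proof (rule same_deriv[where S="{0<..}" and g'="\<lambda>s. 2*G*ln s + L*(ln a + ln s)"])
      fix t :: real assume t: "t \<in> {0<..}"
      have "((\<lambda>s. W (dg a 0 + s *\<^sub>R E2)) has_real_derivative frob (Tmap G L (dg a 0 + t *\<^sub>R E2)) E2) (at t within {0<..})"
        by (rule pot_line[OF pot _ t E_sym(2)]) (use ab in \<open>auto simp: dg_line2[symmetric] dg_PSym3\<close>)
      then show "((\<lambda>s. W (dg a s)) has_real_derivative 2*G*ln t + L*(ln a + ln t)) (at t within {0<..})"
        using t ab by (simp add: dg_line2[symmetric] frob_E Tmap_dg)
      show "(h has_real_derivative 2*G*ln t + L*(ln a + ln t)) (at t within {0<..})"
        unfolding h_def using t
        by (auto intro!: derivative_eq_intros simp: c_def algebra_simps)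
    qed (use ab in auto)
    then show ?thesis by (simp add: h_def algebra_simps)
  qed
  define e where "e = exp (1::real)"
  have e: "e > 1" "ln e = 1" "ln (e*e) = 2" unfolding e_def by (simp_all add: ln_mult)
  have h1: "W (dg e (e*e)) - W (dg 1 (e*e)) = c + L * (e - 1) * 2" using step1[of e "e*e"] e by simp
  have h2: "W (dg e 1) - W (dg 1 1) = c" using step1[of e 1] e by simp
  have h3: "W (dg e (e*e)) - W (dg e 1) = c * (e * e + 1) + L * (e * e - 1)" using step2[of e "e*e"] e by simp
  have h4: "W (dg 1 (e*e)) - W (dg 1 1) = c * (e * e + 1)" using step2[of 1 "e*e"] e by simp
  have "L * (e - 1) * 2 = L * (e * e - 1)" using h1 h2 h3 h4 by linarith
  hence "L * (2*(e - 1) - (e*e - 1)) = 0" by (simp add: algebra_simps)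
  hence "2*(e - 1) - (e*e - 1) = 0" using L by simp
  hence "(e - 1)^2 = 0" by (simp add: power2_eq_square algebra_simps)
  thus False using e by simp
qed



lemma frob_inner: "frob X Y = X \<bullet> Y"
  unfolding frob_alt inner_vec_def by simp

lemma norm_sq_frob: "(norm X)^2 = frob X X"
  by (simp add: frob_inner power2_norm_eq_inner)

lemma frob_same:
  assumes Q: "orthogonal_matrix Q"
  shows "frob (Q ** diag3 a ** transpose Q) (Q ** diag3 b ** transpose Q) = (\<Sum>k\<in>UNIV. a k * b k)"
proof -
  have "transpose Q ** Q = mat 1" using Q by (simp add: orthogonal_matrix_def)
  then show ?thesis unfolding frob_sandwich
    by (simp add: mat_def sum_3)
qed

lemma mat1_sandwich: "orthogonal_matrix Q \<Longrightarrow> mat 1 = Q ** diag3 (\<lambda>i. 1) ** transpose Q"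
  by (simp add: diag3_one orthogonal_matrix_def)

lemma E_eig:
  assumes Q: "orthogonal_matrix Q" and l: "\<forall>i. l i > 0" and V: "V = Q ** diag3 l ** transpose Q"
  shows "frob V (mlog V - mat 1) = (\<Sum>k\<in>UNIV. l k * ln (l k) - l k)"
proof -
  have "frob V (mlog V - mat 1) = frob V (mlog V) - frob V (mat 1)"
    by (simp add: frob_inner inner_diff_right)
  also have "\<dots> = (\<Sum>k\<in>UNIV. l k * ln (l k)) - (\<Sum>k\<in>UNIV. l k)"
    unfolding mlog_eq[OF Q l V] using mat1_sandwich[OF Q] V frob_same[OF Q] by simp
  finally show ?thesis by (simp add: sum_subtractf)
qed

lemma orth_sums:
  assumes "orthogonal_matrix (C::mat3)"
  shows "(\<Sum>m\<in>UNIV. (C$k$m)^2) = 1" "(\<Sum>k\<in>UNIV. (C$k$m)^2) = 1"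
proof -
  have "norm (row k C) = 1" "norm (column m C) = 1"
    using assms orthogonal_matrix_orthonormal_rows orthogonal_matrix_orthonormal_columns by blast+
  hence "row k C \<bullet> row k C = 1" "column m C \<bullet> column m C = 1" by (simp_all add: norm_eq_1)
  thus "(\<Sum>m\<in>UNIV. (C$k$m)^2) = 1" "(\<Sum>k\<in>UNIV. (C$k$m)^2) = 1"
    by (simp_all add: inner_vec_def row_def column_def power2_eq_square)
qed

lemma phi_bounds:
  fixes mu la :: real assumes "mu > 0" "la > 0"
  shows "0 \<le> mu*ln mu - mu - mu*ln la + la" "mu*ln mu - mu - mu*ln la + la \<le> (mu - la)^2 / la"
proof -
  have "ln (la/mu) \<le> la/mu - 1" using assms by (intro ln_le_minus_one) simp
  hence "mu * ln (la/mu) \<le> mu * (la/mu - 1)" using assms by (simp add: mult_left_mono)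
  thus "0 \<le> mu*ln mu - mu - mu*ln la + la" using assms by (simp add: ln_div algebra_simps)
  have "ln (mu/la) \<le> mu/la - 1" using assms by (intro ln_le_minus_one) simp
  hence "mu * ln (mu/la) \<le> mu * (mu/la - 1)" using assms by (simp add: mult_left_mono)
  hence "mu*ln mu - mu*ln la \<le> mu*mu/la - mu" using assms by (simp add: ln_div algebra_simps)
  moreover have "(mu - la)^2 / la = mu*mu/la - 2*mu + la" using assms
    by (simp add: power2_eq_square field_simps)
  ultimately show "mu*ln mu - mu - mu*ln la + la \<le> (mu - la)^2 / la" by linarith
qed



definition Ef :: "mat3 \<Rightarrow> real" where "Ef V = frob V (mlog V - mat 1)"

lemma rowsum_w: "orthogonal_matrix (C::mat3) \<Longrightarrow> (\<Sum>k\<in>UNIV. \<Sum>m\<in>UNIV. (C$k$m)^2 * f k) = (\<Sum>k\<in>UNIV. f k)"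
  using orth_sums(1)[of C] by (simp add: sum_distrib_right[symmetric])

lemma colsum_w: "orthogonal_matrix (C::mat3) \<Longrightarrow> (\<Sum>k\<in>UNIV. \<Sum>m\<in>UNIV. (C$k$m)^2 * f m) = (\<Sum>m\<in>UNIV. f m)"
  using orth_sums(2)[of C] by (subst sum.swap) (simp add: sum_distrib_right[symmetric])

lemma remainder_bounds:
  assumes P: "orthogonal_matrix P" and la: "\<forall>i. la i > 0" and U: "U = P ** diag3 la ** transpose P"
    and Q: "orthogonal_matrix Q" and mu: "\<forall>i. mu i > 0" and V: "V = Q ** diag3 mu ** transpose Q"
    and m0: "m0 > 0" "\<forall>k. m0 \<le> la k"
  shows "0 \<le> Ef V - Ef U - frob (mlog U) (V - U)"
    "Ef V - Ef U - frob (mlog U) (V - U) \<le> (norm (V - U))^2 / m0"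
proof -
  define C where "C = transpose P ** Q"
  have Co: "orthogonal_matrix C" unfolding C_def using P Q by (simp add: orthogonal_matrix_mul)
  define c where "c k m = (C$k$m)^2" for k m
  define phi where "phi k m = mu m * ln (mu m) - mu m - mu m * ln (la k) + la k" for k m
  have mU: "mlog U = P ** diag3 (\<lambda>i. ln (la i)) ** transpose P" by (rule mlog_eq[OF P la U])
  have EV: "Ef V = (\<Sum>k\<in>UNIV. \<Sum>m\<in>UNIV. c k m * (mu m * ln (mu m) - mu m))"
    unfolding Ef_def E_eig[OF Q mu V] c_def colsum_w[OF Co] ..
  have EU: "Ef U = (\<Sum>k\<in>UNIV. \<Sum>m\<in>UNIV. c k m * (la k * ln (la k) - la k))"
    unfolding Ef_def E_eig[OF P la U] c_def rowsum_w[OF Co] ..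
  have LV: "frob (mlog U) V = (\<Sum>k\<in>UNIV. \<Sum>m\<in>UNIV. c k m * (ln (la k) * mu m))"
    unfolding mU V frob_sandwich c_def C_def by (simp add: algebra_simps)
  have LU: "frob (mlog U) U = (\<Sum>k\<in>UNIV. \<Sum>m\<in>UNIV. c k m * (ln (la k) * la k))"
    unfolding c_def rowsum_w[OF Co] mU unfolding U frob_same[OF P] ..
  have R: "Ef V - Ef U - frob (mlog U) (V - U) = (\<Sum>k\<in>UNIV. \<Sum>m\<in>UNIV. c k m * phi k m)"
  proof -
    have "frob (mlog U) (V - U) = frob (mlog U) V - frob (mlog U) U"
      by (simp add: frob_inner inner_diff_right)
    then show ?thesis unfolding EV EU LV LU phi_def by (simp add: sum_3 algebra_simps)
  qed
  have VV: "frob V V = (\<Sum>k\<in>UNIV. \<Sum>m\<in>UNIV. c k m * (mu m * mu m))"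
    unfolding c_def colsum_w[OF Co] unfolding V frob_same[OF Q] ..
  have UU: "frob U U = (\<Sum>k\<in>UNIV. \<Sum>m\<in>UNIV. c k m * (la k * la k))"
    unfolding c_def rowsum_w[OF Co] unfolding U frob_same[OF P] ..
  have UV: "frob U V = (\<Sum>k\<in>UNIV. \<Sum>m\<in>UNIV. c k m * (la k * mu m))"
    unfolding U V frob_sandwich c_def C_def by (simp add: algebra_simps)
  have N: "(norm (V - U))^2 = (\<Sum>k\<in>UNIV. \<Sum>m\<in>UNIV. c k m * (mu m - la k)^2)"
  proof -
    have "(norm (V - U))^2 = frob V V - 2 * frob U V + frob U U"
      unfolding norm_sq_frob frob_inner by (simp add: inner_diff_left inner_diff_right inner_commute)
    then show ?thesis unfolding VV UU UV by (simp add: sum_3 power2_eq_square algebra_simps)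
  qed
  have c0: "c k m \<ge> 0" for k m by (simp add: c_def)
  have pb: "0 \<le> phi k m" "phi k m \<le> (mu m - la k)^2 / la k" for k m
    unfolding phi_def using phi_bounds[of "mu m" "la k"] mu la by auto
  show "0 \<le> Ef V - Ef U - frob (mlog U) (V - U)"
    unfolding R using c0 pb by (intro sum_nonneg) simp
  have "(\<Sum>k\<in>UNIV. \<Sum>m\<in>UNIV. c k m * phi k m) \<le> (\<Sum>k\<in>UNIV. \<Sum>m\<in>UNIV. c k m * (mu m - la k)^2 / m0)"
  proof (intro sum_mono)
    fix k m
    have "phi k m \<le> (mu m - la k)^2 / la k" by (rule pb)
    also have "\<dots> \<le> (mu m - la k)^2 / m0" using m0 la by (intro divide_left_mono) auto
    finally show "c k m * phi k m \<le> c k m * (mu m - la k)^2 / m0"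
      using c0[of k m] by (simp add: mult_left_mono times_divide_eq_right[symmetric] del: times_divide_eq_right)
  qed
  also have "\<dots> = (norm (V - U))^2 / m0" unfolding N by (simp add: sum_divide_distrib)
  finally show "Ef V - Ef U - frob (mlog U) (V - U) \<le> (norm (V - U))^2 / m0" unfolding R .
qed



lemma Ef_deriv:
  assumes U: "U \<in> PSym3"
  shows "(Ef has_derivative (\<lambda>H. frob (mlog U) H)) (at U within PSym3)"
proof -
  obtain P la where P: "orthogonal_matrix P" and la: "\<forall>i. la i > 0" and Ueq: "U = P ** diag3 la ** transpose P"
    using PSym3_decomp[OF U] by blast
  define m0 where "m0 = Min (range la)"
  have m0: "m0 > 0" "\<forall>k. m0 \<le> la k"
    unfolding m0_def using la by (auto simp: Min_gr_iff)
  have bl: "bounded_linear (\<lambda>H. frob (mlog U) H)"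
    unfolding frob_inner by (rule bounded_linear_inner_right)
  have lim: "((\<lambda>y. (1 / norm (y - U)) *\<^sub>R (Ef y - (Ef U + frob (mlog U) (y - U)))) \<longlongrightarrow> 0) (at U within PSym3)"
  proof (rule tendsto_0_le[where f="\<lambda>y. y - U" and K="1/m0"])
    show "((\<lambda>y. y - U) \<longlongrightarrow> 0) (at U within PSym3)"
      by (rule tendsto_eq_intros | simp)+
    show "\<forall>\<^sub>F y in at U within PSym3.
        norm ((1 / norm (y - U)) *\<^sub>R (Ef y - (Ef U + frob (mlog U) (y - U)))) \<le> norm (y - U) * (1 / m0)"
      unfolding eventually_at_filter
    proof (rule always_eventually, intro allI impI)
      fix y assume "y \<noteq> U" "y \<in> PSym3"
      then obtain Q mu where Q: "orthogonal_matrix Q" and mu: "\<forall>i. mu i > 0" and yeq: "y = Q ** diag3 mu ** transpose Q"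
        using PSym3_decomp by blast
      have b: "0 \<le> Ef y - Ef U - frob (mlog U) (y - U)" "Ef y - Ef U - frob (mlog U) (y - U) \<le> (norm (y - U))^2 / m0"
        using remainder_bounds[OF P la Ueq Q mu yeq m0] by auto
      have np: "norm (y - U) > 0" using \<open>y \<noteq> U\<close> by simp
      have "norm ((1 / norm (y - U)) *\<^sub>R (Ef y - (Ef U + frob (mlog U) (y - U))))
          = (Ef y - Ef U - frob (mlog U) (y - U)) / norm (y - U)"
        using b(1) np by (simp add: abs_of_nonneg)
      also have "\<dots> \<le> ((norm (y - U))^2 / m0) / norm (y - U)"
        using b(2) np by (intro divide_right_mono) auto
      also have "\<dots> = norm (y - U) * (1 / m0)" using np by (simp add: power2_eq_square)
      finally show "norm ((1 / norm (y - U)) *\<^sub>R (Ef y - (Ef U + frob (mlog U) (y - U)))) \<le> norm (y - U) * (1 / m0)" .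
    qed
  qed
  show ?thesis unfolding has_derivative_within using bl lim by blast
qed

definition W0 :: "real \<Rightarrow> mat3 \<Rightarrow> real" where "W0 G U = 2 * G * (frob U (mlog U - mat 1) + 3)"

lemma W0_potential: "is_potential (W0 G) (Tmap G 0)"
  unfolding is_potential_def
proof
  fix U assume U: "U \<in> PSym3"
  have "(W0 G has_derivative (\<lambda>H. 2 * G * frob (mlog U) H)) (at U within PSym3)"
  proof -
    have "((\<lambda>V. 2 * G * (Ef V + 3)) has_derivative (\<lambda>H. 2 * G * (frob (mlog U) H + 0))) (at U within PSym3)"
      by (intro derivative_intros Ef_deriv[OF U])
    then show ?thesis unfolding W0_def Ef_def[symmetric] by simp
  qed
  moreover have "\<forall>H\<in>Sym3. 2 * G * frob (mlog U) H = frob (Tmap G 0 U) H"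
    by (simp add: Tmap_def frob_inner)
  ultimately show "\<exists>D. (W0 G has_derivative D) (at U within PSym3) \<and> (\<forall>H\<in>Sym3. D H = frob (Tmap G 0 U) H)"
    by blast
qed

lemma W0_one: "W0 G (mat 1) = 0"
proof -
  have "frob (mat 1) (mlog (mat 1) - mat 1) = -3"
    unfolding mlog_one frob_alt by (simp add: sum_3 mat_def)
  then show ?thesis unfolding W0_def by simp
qed

lemma W0_eig:
  assumes U: "U \<in> PSym3" and Q: "orthogonal_matrix Q" and eq: "U = Q ** diag3 l ** transpose Q"
  shows "W0 G U = 2 * G * (\<Sum>i\<in>UNIV. l i * (ln (l i) - 1)) + 6 * G"
proof -
  have l: "\<forall>i. l i > 0" using PSym3_eig_pos[OF U Q eq] by blast
  have "frob U (mlog U - mat 1) = (\<Sum>k\<in>UNIV. l k * ln (l k) - l k)" by (rule E_eig[OF Q l eq])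
  also have "\<dots> = (\<Sum>i\<in>UNIV. l i * (ln (l i) - 1))" by (simp add: algebra_simps)
  finally show ?thesis unfolding W0_def by (simp add: algebra_simps)
qed

lemma potential_unique:
  assumes pW: "is_potential W T" and pV: "is_potential V T" and one: "W (mat 1) = V (mat 1)"
    and U: "U \<in> PSym3"
  shows "W U = V U"
proof -
  define E where "E = U - mat 1"
  have E: "E \<in> Sym3" using U unfolding E_def PSym3_def Sym3_def
    by (simp add: vec_eq_iff transpose_def mat_def)
  have line: "\<forall>s\<in>{0..1}. mat 1 + s *\<^sub>R E \<in> PSym3"
  proof
    fix s :: real assume "s \<in> {0..1}"
    then have "(1 - s) *\<^sub>R mat 1 + s *\<^sub>R U \<in> PSym3" using PSym3_convex[OF one_PSym3 U] by auto
    moreover have "(1 - s) *\<^sub>R mat 1 + s *\<^sub>R U = mat 1 + s *\<^sub>R E"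
      by (simp add: E_def algebra_simps)
    ultimately show "mat 1 + s *\<^sub>R E \<in> PSym3" by simp
  qed
  have "W (mat 1 + 1 *\<^sub>R E) - W (mat 1 + 0 *\<^sub>R E) = V (mat 1 + 1 *\<^sub>R E) - V (mat 1 + 0 *\<^sub>R E)"
    by (rule same_deriv[where S="{0..1}" and g'="\<lambda>t. frob (T (mat 1 + t *\<^sub>R E)) E"])
       (auto intro!: pot_line[OF pW line _ E] pot_line[OF pV line _ E])
  then show ?thesis using one by (simp add: E_def)
qed

theorem mainTheorem13:
  fixes G \<Lambda> :: real
  assumes "G \<noteq> 0"
  shows "((\<exists>W. is_potential W (Tmap G \<Lambda>)) \<longleftrightarrow> \<Lambda> = 0) \<and>
    (\<Lambda> = 0 \<longrightarrow>
      (let W0 = (\<lambda>U. 2 * G * (frob U (mlog U - mat 1) + 3)) in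
        is_potential W0 (Tmap G \<Lambda>) \<and> W0 (mat 1) = 0 \<and>
        (\<forall>W. is_potential W (Tmap G \<Lambda>) \<and> W (mat 1) = 0 \<longrightarrow> (\<forall>U\<in>PSym3. W U = W0 U)) \<and>
        (\<forall>U Q l. U \<in> PSym3 \<and> orthogonal_matrix Q \<and> U = Q ** diag3 l ** transpose Q \<longrightarrow>
           W0 U = 2 * G * (\<Sum>i\<in>UNIV. l i * (ln (l i) - 1)) + 6 * G)))"
proof -
  have eqW: "(\<lambda>U. 2 * G * (frob U (mlog U - mat 1) + 3)) = W0 G" by (simp add: W0_def fun_eq_iff)
  have part1: "(\<exists>W. is_potential W (Tmap G \<Lambda>)) \<longleftrightarrow> \<Lambda> = 0"
    using not_potential W0_potential by blast
  have part2: "\<Lambda> = 0 \<longrightarrow>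
      (let W0 = (\<lambda>U. 2 * G * (frob U (mlog U - mat 1) + 3)) in
        is_potential W0 (Tmap G \<Lambda>) \<and> W0 (mat 1) = 0 \<and>
        (\<forall>W. is_potential W (Tmap G \<Lambda>) \<and> W (mat 1) = 0 \<longrightarrow> (\<forall>U\<in>PSym3. W U = W0 U)) \<and>
        (\<forall>U Q l. U \<in> PSym3 \<and> orthogonal_matrix Q \<and> U = Q ** diag3 l ** transpose Q \<longrightarrow>
           W0 U = 2 * G * (\<Sum>i\<in>UNIV. l i * (ln (l i) - 1)) + 6 * G))"
  proof
    assume L: "\<Lambda> = 0"
    show "let W0 = (\<lambda>U. 2 * G * (frob U (mlog U - mat 1) + 3)) in
        is_potential W0 (Tmap G \<Lambda>) \<and> W0 (mat 1) = 0 \<and>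
        (\<forall>W. is_potential W (Tmap G \<Lambda>) \<and> W (mat 1) = 0 \<longrightarrow> (\<forall>U\<in>PSym3. W U = W0 U)) \<and>
        (\<forall>U Q l. U \<in> PSym3 \<and> orthogonal_matrix Q \<and> U = Q ** diag3 l ** transpose Q \<longrightarrow>
           W0 U = 2 * G * (\<Sum>i\<in>UNIV. l i * (ln (l i) - 1)) + 6 * G)"
      unfolding Let_def eqW L
    proof (intro conjI allI impI ballI)
      show "is_potential (W0 G) (Tmap G 0)" by (rule W0_potential)
      show "W0 G (mat 1) = 0" by (rule W0_one)
    next
      fix W U assume "is_potential W (Tmap G 0) \<and> W (mat 1) = 0" "U \<in> PSym3"
      then show "W U = W0 G U" using potential_unique[OF _ W0_potential[of G]] W0_one[of G] by auto
    next
      fix U Q l assume "U \<in> PSym3 \<and> orthogonal_matrix Q \<and> U = Q ** diag3 l ** transpose Q"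
      then show "W0 G U = 2 * G * (\<Sum>i\<in>UNIV. l i * (ln (l i) - 1)) + 6 * G"
        using W0_eig by blast
    qed
  qed
  show ?thesis using part1 part2 by blast
qed


end
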